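(* Let $k\geq2$ be an integer, let $\mathcal{S}\subseteq\mathbb{A}$ be a ring (where $\mathbb{A}$ is the set of real algebraic numbers), let $F_0,\dots,F_{k-1}$ be square matrices over $\mathcal{S}$ all of the same dimension with $F_0$ the zero matrix, and set $F(n)=F_{n_0}\cdots F_{n_{s-1}}$ for $(n)_k=n_{s-1}\cdots n_0$. Then for every real $\rho'>0$, the joint spectral radius $\rho$ of $\{F_1,\dots,F_{k-1}\}$ satisfies $\rho\leq\rho'$ iff for every $\varepsilon>0$ we have $F(n)\in O\bigl(n^{\log_k\rho'+\varepsilon}\bigr)$ as $n\to\infty$.
   Context: For $n\in\mathbb{N}_0$, $(n)_k=n_{s-1}\cdots n_0$ is the standard base-$k$ representation of $n$ (no leading zeros; $(0)_k$ empty). The joint spectral radius of a finite set $S$ of square matrices is $\rho(S)=\lim_{\ell\to\infty}\max\{\|A_1\cdots A_\ell\|^{1/\ell}: A_i\in S\}$ for any matrix norm. A matrix sequence $(F(n))$ is in $O(g(n))$ if there are $n_0$, $c>0$ with $\|F(n)\|\leq c\,g(n)$ for $n\geq n_0$ (equivalently, each entry sequence is in $O(g(n))$). *)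

theory Defs
  imports "HOL-Analysis.Analysis" "HOL-Library.Landau_Symbols"
    "HOL-Computational_Algebra.Polynomial"
begin

function digits :: "nat \<Rightarrow> nat \<Rightarrow> nat list" where
  "digits k n = (if n = 0 \<or> k < 2 then [] else n mod k # digits k (n div k))"
  by auto
termination
  by (relation "Wellfounded.measure snd") auto

definition mat_list_prod :: "(real^'n^'n) list \<Rightarrow> real^'n^'n" where
  "mat_list_prod As = foldr (\<lambda>A M. A ** M) As (mat 1)"

definition digit_mat_seq :: "nat \<Rightarrow> (nat \<Rightarrow> real^'n^'n) \<Rightarrow> nat \<Rightarrow> real^'n^'n" where
  "digit_mat_seq k Fs n = mat_list_prod (map Fs (digits k n))"

text \<open>Joint spectral radius of a finite set of square matrices, as the limit
  of max ||A_1 ... A_l||^(1/l) (with the Frobenius norm of real^'n^'n).\<close>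
definition jsr :: "(real^'n^'n) set \<Rightarrow> real" where
  "jsr T = lim (\<lambda>l. Max {norm (mat_list_prod As) powr (1 / real l) | As.
                          set As \<subseteq> T \<and> length As = l})"

definition real_subring :: "real set \<Rightarrow> bool" where
  "real_subring S \<longleftrightarrow> 0 \<in> S \<and> 1 \<in> S \<and> (\<forall>x\<in>S. \<forall>y\<in>S. x + y \<in> S \<and> x - y \<in> S \<and> x * y \<in> S)"

end

theory Submission imports Defs begin

lemma matrix_mult_row: "(A ** B) $ i = (\<Sum>l\<in>UNIV. (A $ i $ l) *\<^sub>R (B $ l))"
  for A B :: "real^'n^'n"
  by (simp add: vec_eq_iff matrix_matrix_mult_def sum_component)

lemma norm_matrix_mult_le: "norm (A ** B) \<le> norm A * norm B"
  for A B :: "real^'n^'n"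
proof -
  have row: "norm ((A ** B) $ i) \<le> norm (A $ i) * norm B" for i
  proof -
    have "norm ((A ** B) $ i) \<le> (\<Sum>l\<in>UNIV. norm ((A $ i $ l) *\<^sub>R (B $ l)))"
      unfolding matrix_mult_row by (rule norm_sum)
    also have "\<dots> = (\<Sum>l\<in>UNIV. \<bar>A $ i $ l\<bar> * \<bar>norm (B $ l)\<bar>)" by simp
    also have "\<dots> \<le> L2_set (\<lambda>l. A $ i $ l) UNIV * L2_set (\<lambda>l. norm (B $ l)) UNIV"
      by (rule L2_set_mult_ineq)
    also have "\<dots> = norm (A $ i) * norm B"
      by (simp add: norm_vec_def L2_set_def)
    finally show ?thesis .
  qed
  have "norm (A ** B) = L2_set (\<lambda>i. norm ((A ** B) $ i)) UNIV" by (simp add: norm_vec_def)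
  also have "\<dots> \<le> L2_set (\<lambda>i. norm B * norm (A $ i)) UNIV"
    by (rule L2_set_mono) (use row in \<open>auto simp: mult.commute\<close>)
  also have "\<dots> = norm B * norm A"
    by (simp add: L2_set_right_distrib[symmetric] norm_vec_def)
  finally show ?thesis by (simp add: mult.commute)
qed

lemma mat_list_prod_append: "mat_list_prod (As @ Bs) = mat_list_prod As ** mat_list_prod Bs"
  by (induction As) (auto simp: mat_list_prod_def matrix_mul_assoc)

lemma mat_list_prod_zero: "0 \<in> set As \<Longrightarrow> mat_list_prod As = 0"
  by (induction As) (auto simp: mat_list_prod_def)

lemma digits_simps: "digits k 0 = []" "k \<ge> 2 \<Longrightarrow> n > 0 \<Longrightarrow> digits k n = n mod k # digits k (n div k)"
  by auto

declare digits.simps[simp del]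

lemma digits_bounds:
  assumes "k \<ge> 2" "n > 0"
  shows "k ^ (length (digits k n) - 1) \<le> n \<and> n < k ^ length (digits k n)"
  using assms(2)
proof (induction n rule: less_induct)
  case (less n)
  show ?case
  proof (cases "n div k = 0")
    case True
    then have "n < k" using assms by (simp add: div_eq_0_iff)
    then show ?thesis using less assms True by (auto simp: digits_simps)
  next
    case False
    have lt: "n div k < n" using less assms by auto
    have IH: "k ^ (length (digits k (n div k)) - 1) \<le> n div k \<and> n div k < k ^ length (digits k (n div k))"
      using less.IH[OF lt] False by auto
    have ne: "digits k (n div k) \<noteq> []" using False assms by (auto simp: digits_simps)
    define s' where "s' = length (digits k (n div k))"
    have s'1: "s' \<ge> 1" using ne s'_def by (cases "digits k (n div k)") auto
    have len: "length (digits k n) = s' + 1" using assms less.prems s'_def by (simp add: digits_simps)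
    have a: "k * (n div k) \<le> n" by simp
    have b: "n < k * (n div k + 1)" using assms
    proof -
      have "n = k * (n div k) + n mod k" by simp
      moreover have "n mod k < k" using assms by simp
      moreover have "k * (n div k + 1) = k * (n div k) + k" by simp
      ultimately show ?thesis by linarith
    qed
    have "k ^ s' = k * k ^ (s' - 1)" using s'1 by (cases s') auto
    also have "\<dots> \<le> k * (n div k)" using IH s'_def by simp
    finally have c: "k ^ s' \<le> n" using a by linarith
    have "n div k + 1 \<le> k ^ s'" using IH s'_def by simp
    then have "k * (n div k + 1) \<le> k * k ^ s'" by (rule mult_le_mono2)
    then have d: "n < k ^ (s' + 1)" using b by simp
    show ?thesis using c d len by simp
  qed
qed

lemma digits_lt: "k \<ge> 2 \<Longrightarrow> d \<in> set (digits k n) \<Longrightarrow> d < k"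
proof (induction n rule: less_induct)
  case (less n)
  show ?case
  proof (cases "n = 0")
    case True then show ?thesis using less by (simp add: digits_simps)
  next
    case False
    then have "n div k < n" using less by auto
    then show ?thesis using less.IH[OF \<open>n div k < n\<close>] less.prems False by (auto simp: digits_simps)
  qed
qed

definition dval :: "nat \<Rightarrow> nat list \<Rightarrow> nat" where
  "dval k ds = foldr (\<lambda>x acc. x + k * acc) ds 0"

lemma digits_dval:
  assumes "k \<ge> 2" "set ds \<subseteq> {1..<k}"
  shows "digits k (dval k ds) = ds"
  using assms(2)
proof (induction ds)
  case Nil
  then show ?case by (simp add: dval_def digits_simps)
next
  case (Cons x ds)
  have v: "dval k (x # ds) = x + k * dval k ds" by (simp add: dval_def)
  have x: "1 \<le> x" "x < k" using Cons.prems by auto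
  have "(x + k * dval k ds) mod k = x" "(x + k * dval k ds) div k = dval k ds"
    using x by auto
  then show ?case using v x Cons assms(1) by (auto simp: digits_simps)
qed

lemma lists_from_image:
  "set As \<subseteq> f ` S \<Longrightarrow> \<exists>ds. set ds \<subseteq> S \<and> As = map f ds"
proof (induction As)
  case Nil
  then show ?case by auto
next
  case (Cons a As)
  then obtain ds where "set ds \<subseteq> S" "As = map f ds" by auto
  moreover obtain x where "x \<in> S" "a = f x" using Cons.prems by auto
  ultimately show ?case by (intro exI[of _ "x # ds"]) auto
qed

definition PL :: "(real^'n^'n) set \<Rightarrow> nat \<Rightarrow> (real^'n^'n) list set" where
  "PL T l = {As. set As \<subseteq> T \<and> length As = l}"

definition MM :: "(real^'n^'n) set \<Rightarrow> nat \<Rightarrow> real" where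
  "MM T l = Max ((\<lambda>As. norm (mat_list_prod As)) ` PL T l)"

lemma PL_finite: "finite T \<Longrightarrow> finite (PL T l)"
  unfolding PL_def by (rule finite_lists_length_eq)

lemma PL_ne: "T \<noteq> {} \<Longrightarrow> PL T l \<noteq> {}"
proof -
  assume "T \<noteq> {}"
  then obtain t where "t \<in> T" by auto
  then have "replicate l t \<in> PL T l" by (auto simp: PL_def)
  then show ?thesis by auto
qed

context
  fixes T :: "(real^'n^'n) set"
  assumes finT: "finite T" and neT: "T \<noteq> {}"
begin

lemma MM_ge: "As \<in> PL T l \<Longrightarrow> norm (mat_list_prod As) \<le> MM T l"
  unfolding MM_def using PL_finite[OF finT] by (intro Max_ge) auto

lemma MM_in: "\<exists>As\<in>PL T l. MM T l = norm (mat_list_prod As)"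
proof -
  have "MM T l \<in> (\<lambda>As. norm (mat_list_prod As)) ` PL T l"
    unfolding MM_def using PL_finite[OF finT] PL_ne[OF neT] by (intro Max_in) auto
  then show ?thesis by auto
qed

lemma MM_nonneg: "0 \<le> MM T l"
  using MM_in[of l] by (metis norm_ge_zero)

lemma MM_mult: "MM T (a + b) \<le> MM T a * MM T b"
proof -
  obtain As where As: "As \<in> PL T (a + b)" "MM T (a + b) = norm (mat_list_prod As)"
    using MM_in by blast
  have "As = take a As @ drop a As" by simp
  then have "mat_list_prod As = mat_list_prod (take a As) ** mat_list_prod (drop a As)"
    by (metis mat_list_prod_append)
  then have "norm (mat_list_prod As) \<le> norm (mat_list_prod (take a As)) * norm (mat_list_prod (drop a As))"
    using norm_matrix_mult_le by metis
  also have "\<dots> \<le> MM T a * MM T b"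
  proof (rule mult_mono)
    show "norm (mat_list_prod (take a As)) \<le> MM T a"
      using As(1) by (intro MM_ge) (auto simp: PL_def dest: in_set_takeD)
    show "norm (mat_list_prod (drop a As)) \<le> MM T b"
      using As(1) by (intro MM_ge) (auto simp: PL_def dest: in_set_dropD)
  qed (auto simp: MM_nonneg)
  finally show ?thesis using As by simp
qed

lemma jsr_eq: "jsr T = lim (\<lambda>l. MM T l powr (1 / real l))"
proof -
  have "Max {norm (mat_list_prod As) powr (1 / real l) | As. set As \<subseteq> T \<and> length As = l}
        = MM T l powr (1 / real l)" for l
  proof (rule Max_eqI)
    have "{norm (mat_list_prod As) powr (1 / real l) | As. set As \<subseteq> T \<and> length As = l}
        = (\<lambda>As. norm (mat_list_prod As) powr (1 / real l)) ` PL T l"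
      by (auto simp: PL_def)
    then show "finite {norm (mat_list_prod As) powr (1 / real l) | As. set As \<subseteq> T \<and> length As = l}"
      using PL_finite[OF finT] by simp
    show "y \<le> MM T l powr (1 / real l)" 
      if "y \<in> {norm (mat_list_prod As) powr (1 / real l) | As. set As \<subseteq> T \<and> length As = l}" for y
      using that MM_ge by (auto simp: PL_def intro!: powr_mono2)
    obtain As where "As \<in> PL T l" "MM T l = norm (mat_list_prod As)" using MM_in by blast
    then show "MM T l powr (1 / real l) \<in> {norm (mat_list_prod As) powr (1 / real l) | As. set As \<subseteq> T \<and> length As = l}"
      by (auto simp: PL_def)
  qed
  then show ?thesis unfolding jsr_def by simp
qed

lemma MM_bound:
  assumes "d > 0" "m \<ge> 1" "MM T m \<le> d ^ m"
  shows "\<exists>K>0. \<forall>l. MM T l \<le> K * d ^ l"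
proof -
  define K where "K = 1 + (\<Sum>r<m. MM T r / d ^ r)"
  have Kpos: "K > 0" unfolding K_def using assms(1)
    by (intro add_pos_nonneg sum_nonneg divide_nonneg_pos) (auto simp: MM_nonneg)
  have "MM T l \<le> K * d ^ l" for l
  proof (induction l rule: less_induct)
    case (less l)
    show ?case
    proof (cases "l < m")
      case True
      have "MM T l / d ^ l \<le> (\<Sum>r<m. MM T r / d ^ r)"
        using True assms(1) by (intro member_le_sum) (auto simp: MM_nonneg)
      then have "MM T l / d ^ l \<le> K" unfolding K_def by simp
      then show ?thesis using assms(1) by (simp add: divide_le_eq mult.commute)
    next
      case False
      then have l: "l = m + (l - m)" "l - m < l" using assms(2) by auto
      have "MM T l \<le> MM T m * MM T (l - m)" using MM_mult[of m "l - m"] l(1) by simp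
      also have "\<dots> \<le> d ^ m * (K * d ^ (l - m))"
        using less.IH[OF l(2)] assms by (intro mult_mono) (auto simp: MM_nonneg)
      also have "\<dots> = K * d ^ (m + (l - m))" by (simp add: power_add)
      finally show ?thesis using l(1) by simp
    qed
  qed
  then show ?thesis using Kpos by blast
qed

lemma a_bound:
  assumes "K > 0" "d > 0" "MM T l \<le> K * d ^ l" "l \<ge> 1"
  shows "MM T l powr (1 / real l) \<le> K powr (1 / real l) * d"
proof -
  have "MM T l powr (1 / real l) \<le> (K * d ^ l) powr (1 / real l)"
    using assms by (intro powr_mono2) (auto simp: MM_nonneg)
  also have "\<dots> = K powr (1 / real l) * (d ^ l) powr (1 / real l)"
    using assms by (simp add: powr_mult)
  also have "(d ^ l) powr (1 / real l) = d"
    using assms by (simp add: powr_realpow[symmetric] powr_powr)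
  finally show ?thesis .
qed

lemma root_const_tendsto: "K > 0 \<Longrightarrow> (\<lambda>l. K powr (1 / real l) * d) \<longlonglongrightarrow> d"
proof -
  assume K: "K > 0"
  have "(\<lambda>l. 1 / real l) \<longlonglongrightarrow> 0" by (rule lim_1_over_n)
  then have "(\<lambda>l. K powr (1 / real l)) \<longlonglongrightarrow> K powr 0"
    using K by (intro tendsto_powr) auto
  then have "(\<lambda>l. K powr (1 / real l) * d) \<longlonglongrightarrow> 1 * d"
    using K by (intro tendsto_mult) auto
  then show ?thesis by simp
qed

lemma a_pow: "l \<ge> 1 \<Longrightarrow> (MM T l powr (1 / real l)) ^ l = MM T l"
  using MM_nonneg[of l]
  by (cases "MM T l = 0") (auto simp: powr_realpow[symmetric] powr_powr)

definition "Lj = Inf ((\<lambda>l. MM T l powr (1 / real l)) ` {1..})"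

lemma Lj_le: "l \<ge> 1 \<Longrightarrow> Lj \<le> MM T l powr (1 / real l)"
  unfolding Lj_def by (rule cInf_lower) (auto intro: bdd_belowI[of _ 0])

lemma Lj_nonneg: "0 \<le> Lj"
  unfolding Lj_def by (rule cInf_greatest) auto

lemma Lj_less: "Lj < d \<Longrightarrow> \<exists>m\<ge>1. MM T m powr (1 / real m) < d"
  unfolding Lj_def by (subst (asm) cInf_less_iff) (auto intro: bdd_belowI[of _ 0])

lemma a_tendsto: "(\<lambda>l. MM T l powr (1 / real l)) \<longlonglongrightarrow> Lj"
proof (rule order_tendstoI)
  fix y assume "y < Lj"
  show "\<forall>\<^sub>F l in sequentially. y < MM T l powr (1 / real l)"
    using eventually_ge_at_top[of "1::nat"]
  proof eventually_elim
    case (elim l)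
    then show ?case using Lj_le[of l] \<open>y < Lj\<close> by linarith
  qed
next
  fix y assume y: "Lj < y"
  define e where "e = (y - Lj) / 2"
  have e: "e > 0" "Lj + e < y" using y unfolding e_def by (auto simp: field_simps)
  obtain m where m: "m \<ge> 1" "MM T m powr (1 / real m) < Lj + e"
    using Lj_less[of "Lj + e"] e by auto
  have dpos: "Lj + e > 0" using Lj_nonneg e by linarith
  have "MM T m \<le> (Lj + e) ^ m"
    using power_strict_mono[OF m(2), of m] m(1) a_pow[OF m(1)] by auto
  then obtain K where K: "K > 0" "\<forall>l. MM T l \<le> K * (Lj + e) ^ l"
    using MM_bound[OF dpos m(1)] by auto
  have "\<forall>\<^sub>F l in sequentially. K powr (1 / real l) * (Lj + e) < y"
    using root_const_tendsto[OF K(1), of "Lj + e"] e(2) by (rule order_tendstoD)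
  then show "\<forall>\<^sub>F l in sequentially. MM T l powr (1 / real l) < y"
    using eventually_ge_at_top[of "1::nat"]
  proof eventually_elim
    case (elim l)
    then show ?case using a_bound[OF K(1) dpos K(2)[rule_format, of l]] by linarith
  qed
qed

lemma jsr_Lj: "jsr T = Lj"
  using jsr_eq a_tendsto by (simp add: limI)

end

lemma pow_powr: "(x::real) > 0 \<Longrightarrow> (x ^ m) powr a = x powr (a * real m)"
  by (simp add: powr_realpow[symmetric] powr_powr mult.commute)

lemma powr_digit_bounds:
  fixes kk x a :: real and s :: nat
  assumes k: "kk > 1" and s: "s \<ge> 1" and lo: "kk ^ (s - 1) \<le> x" and hi: "x < kk ^ s"
  shows "(kk powr a) ^ s \<le> max 1 (kk powr a) * x powr a"
    and "x powr a \<le> max 1 (1 / kk powr a) * (kk powr a) ^ s"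
proof -
  have kp: "kk > 0" using k by simp
  have xp: "x > 0" using lo kp by (smt (verit) zero_less_power)
  have ds: "(kk powr a) ^ s = kk powr (a * real s)"
    using kp by (simp add: powr_realpow[symmetric] powr_powr mult.commute)
  have ds1: "(kk powr a) ^ s = kk powr a * kk powr (a * real (s - 1))"
    using s ds by (simp add: powr_add[symmetric] of_nat_diff algebra_simps)
  have A: "(kk ^ (s - 1)) powr a = kk powr (a * real (s - 1))" using kp by (rule pow_powr)
  have B: "(kk ^ s) powr a = kk powr (a * real s)" using kp by (rule pow_powr)
  have dp: "kk powr a > 0" using kp by simp
  show "(kk powr a) ^ s \<le> max 1 (kk powr a) * x powr a"
  proof (cases "a \<ge> 0")
    case True
    have "kk powr (a * real (s - 1)) \<le> x powr a"
      using A lo True by (metis powr_mono2 zero_le_power kp less_imp_le)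
    then have "(kk powr a) ^ s \<le> kk powr a * x powr a"
      using ds1 dp by simp
    also have "\<dots> \<le> max 1 (kk powr a) * x powr a" by (intro mult_right_mono) auto
    finally show ?thesis .
  next
    case False
    have "kk powr (a * real s) \<le> x powr a"
      using B hi False xp by (metis powr_mono2' less_imp_le not_le)
    then have "(kk powr a) ^ s \<le> 1 * x powr a" using ds by simp
    also have "\<dots> \<le> max 1 (kk powr a) * x powr a" by (intro mult_right_mono) auto
    finally show ?thesis .
  qed
  show "x powr a \<le> max 1 (1 / kk powr a) * (kk powr a) ^ s"
  proof (cases "a \<ge> 0")
    case True
    have "x powr a \<le> kk powr (a * real s)"
      using B hi True xp by (metis powr_mono2 less_imp_le)
    then have "x powr a \<le> 1 * (kk powr a) ^ s" using ds by simp
    also have "\<dots> \<le> max 1 (1 / kk powr a) * (kk powr a) ^ s" by (intro mult_right_mono) auto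
    finally show ?thesis .
  next
    case False
    have "x powr a \<le> kk powr (a * real (s - 1))"
      using A lo False xp kp by (metis powr_mono2' less_imp_le not_le zero_less_power)
    also have "\<dots> = (1 / kk powr a) * (kk powr a) ^ s" using ds1 dp by simp
    also have "\<dots> \<le> max 1 (1 / kk powr a) * (kk powr a) ^ s" by (intro mult_right_mono) auto
    finally show ?thesis .
  qed
qed


theorem corollary3p12:
  fixes k :: nat and S :: "real set" and Fs :: "nat \<Rightarrow> real^'n^'n" and \<rho>' :: real
  assumes "k \<ge> 2"
    and "real_subring S" and "\<forall>x\<in>S. algebraic x"
    and "\<forall>i<k. \<forall>a b. Fs i $ a $ b \<in> S"
    and "Fs 0 = 0"
    and "\<rho>' > 0"
  shows "jsr (Fs ` {1..<k}) \<le> \<rho>' \<longleftrightarrow>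
    (\<forall>\<epsilon>>0. (\<lambda>n. norm (digit_mat_seq k Fs n)) \<in> O(\<lambda>n. real n powr (log k \<rho>' + \<epsilon>)))"
proof -
  note k2 = assms(1) and F0 = assms(5) and rho = assms(6)
  define T where "T = Fs ` {1..<k}"
  have finT: "finite T" unfolding T_def by simp
  have neT: "T \<noteq> {}" unfolding T_def using k2 by auto
  have jsrL: "jsr T = Lj T" using jsr_Lj[OF finT neT] .
  have k1: "real k > 1" using k2 by simp
  define F where "F = digit_mat_seq k Fs"
  have Fn_le: "norm (F n) \<le> MM T (length (digits k n))" for n
  proof (cases "0 \<in> set (digits k n)")
    case True
    then have "F n = 0" unfolding F_def digit_mat_seq_def using F0
      by (intro mat_list_prod_zero) (metis image_eqI list.set_map)
    then show ?thesis using MM_nonneg[OF finT neT] by simp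
  next
    case False
    then have "set (digits k n) \<subseteq> {1..<k}" using digits_lt[OF k2, of _ n]
      by (auto simp: Suc_le_eq) (metis gr0I)
    then have "map Fs (digits k n) \<in> PL T (length (digits k n))"
      unfolding PL_def T_def by auto
    then show ?thesis unfolding F_def digit_mat_seq_def by (rule MM_ge[OF finT neT])
  qed
  have bnds: "real k ^ (length (digits k n) - 1) \<le> real n \<and> real n < real k ^ length (digits k n)
      \<and> length (digits k n) \<ge> 1" if "n > 0" for n
  proof -
    have h: "k ^ (length (digits k n) - 1) \<le> n \<and> n < k ^ length (digits k n)"
      using digits_bounds[OF k2 that] .
    have "length (digits k n) \<noteq> 0"
    proof
      assume "length (digits k n) = 0"
      then show False using h that by simp
    qed
    then show ?thesis using h
      by (metis of_nat_le_iff of_nat_less_iff of_nat_power less_one not_less)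
  qed
  show ?thesis unfolding T_def[symmetric] F_def[symmetric]
  proof
    assume L: "jsr T \<le> \<rho>'"
    show "\<forall>\<epsilon>>0. (\<lambda>n. norm (F n)) \<in> O(\<lambda>n. real n powr (log k \<rho>' + \<epsilon>))"
    proof (intro allI impI)
      fix \<epsilon> :: real assume e: "\<epsilon> > 0"
      define a where "a = log k \<rho>' + \<epsilon>"
      define d where "d = real k powr a"
      have d_eq: "d = \<rho>' * real k powr \<epsilon>"
        unfolding d_def a_def using k1 rho by (simp add: powr_add)
      have "real k powr 0 < real k powr \<epsilon>" using k1 e by (intro powr_less_mono) auto
      then have "1 < real k powr \<epsilon>" using k1 by simp
      then have "\<rho>' < d" using rho d_eq by simp
      then have "Lj T < d" using L jsrL by simp
      then obtain m where m: "m \<ge> 1" "MM T m powr (1 / real m) < d"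
        using Lj_less[OF finT neT] by blast
      have dpos: "d > 0" unfolding d_def using k1 by simp
      have "(MM T m powr (1 / real m)) ^ m < d ^ m"
        using m by (intro power_strict_mono) auto
      then have "MM T m \<le> d ^ m" using a_pow[OF finT neT m(1)] by simp
      then obtain K where K: "K > 0" "\<forall>l. MM T l \<le> K * d ^ l"
        using MM_bound[OF finT neT dpos m(1)] by auto
      have "\<forall>\<^sub>F n in at_top. norm (norm (F n)) \<le> (K * max 1 d) * norm (real n powr a)"
        using eventually_gt_at_top[of "0::nat"]
      proof eventually_elim
        case (elim n)
        define s where "s = length (digits k n)"
        have b: "real k ^ (s - 1) \<le> real n" "real n < real k ^ s" "s \<ge> 1"
          using bnds[OF elim] unfolding s_def by auto
        have "norm (F n) \<le> MM T s" using Fn_le s_def by simp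
        also have "\<dots> \<le> K * d ^ s" using K by simp
        also have "\<dots> \<le> K * (max 1 d * real n powr a)"
          using powr_digit_bounds(1)[OF k1 b(3) b(1) b(2), of a] K(1) unfolding d_def
          by (intro mult_left_mono) auto
        finally show ?case by (simp add: mult.assoc)
      qed
      then show "(\<lambda>n. norm (F n)) \<in> O(\<lambda>n. real n powr (log k \<rho>' + \<epsilon>))"
        unfolding a_def by (rule bigoI)
    qed
  next
    assume H: "\<forall>\<epsilon>>0. (\<lambda>n. norm (F n)) \<in> O(\<lambda>n. real n powr (log k \<rho>' + \<epsilon>))"
    have key: "Lj T \<le> \<rho>' * real k powr \<epsilon>" if e: "\<epsilon> > 0" for \<epsilon>
    proof -
      define a where "a = log k \<rho>' + \<epsilon>"
      define d where "d = real k powr a"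
      have d_eq: "d = \<rho>' * real k powr \<epsilon>"
        unfolding d_def a_def using k1 rho by (simp add: powr_add)
      have dpos: "d > 0" unfolding d_def using k1 by simp
      define D where "D = max 1 (1 / d)"
      have Dpos: "D > 0" unfolding D_def by simp
      obtain c where c: "c > 0" "\<forall>\<^sub>F n in at_top. norm (norm (F n)) \<le> c * norm (real n powr a)"
      proof -
        have "(\<lambda>n. norm (F n)) \<in> O(\<lambda>n. real n powr a)" using H e unfolding a_def by blast
        then show ?thesis using that by (elim landau_o.bigE) blast
      qed
      then obtain N where N: "\<And>n. n \<ge> N \<Longrightarrow> norm (F n) \<le> c * real n powr a"
        by (auto simp: eventually_at_top_linorder)
      have MMb: "MM T l \<le> (c * D) * d ^ l" if l: "l \<ge> N + 1" for l
      proof -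
        obtain As where As: "As \<in> PL T l" "MM T l = norm (mat_list_prod As)"
          using MM_in[OF finT neT] by blast
        obtain ds where ds: "set ds \<subseteq> {1..<k}" "As = map Fs ds"
          using lists_from_image[of As Fs "{1..<k}"] As(1) unfolding PL_def T_def by auto
        have len: "length ds = l" using As(1) ds(2) unfolding PL_def by auto
        define n where "n = dval k ds"
        have dg: "digits k n = ds" unfolding n_def by (rule digits_dval[OF k2 ds(1)])
        have npos: "n > 0" using dg len l by (metis digits_simps(1) gr0I list.size(3) not_less_eq_eq le0 add_le_same_cancel2 le_zero_eq Suc_eq_plus1 nat.distinct(1) Suc_le_eq)
        have b: "real k ^ (l - 1) \<le> real n" "real n < real k ^ l" "l \<ge> 1"
          using bnds[OF npos] dg len by auto
        have "N \<le> l - 1" using l by simp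
        also have "l - 1 < 2 ^ (l - 1)" by (rule less_exp)
        also have "(2::nat) ^ (l - 1) \<le> k ^ (l - 1)" using k2 by (intro power_mono) auto
        also have "k ^ (l - 1) \<le> n" using b(1) by (metis of_nat_le_iff of_nat_power)
        finally have "N \<le> n" by simp
        have "MM T l = norm (F n)" using As ds dg unfolding F_def digit_mat_seq_def by simp
        also have "\<dots> \<le> c * real n powr a" using N[OF \<open>N \<le> n\<close>] .
        also have "\<dots> \<le> c * (D * d ^ l)"
          using powr_digit_bounds(2)[OF k1 b(3) b(1) b(2), of a] c(1) unfolding d_def D_def
          by (intro mult_left_mono) auto
        finally show ?thesis by (simp add: mult.assoc)
      qed
      have ev: "\<forall>\<^sub>F l in sequentially. MM T l powr (1 / real l) \<le> (c * D) powr (1 / real l) * d"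
        using eventually_ge_at_top[of "N + 1"]
      proof eventually_elim
        case (elim l)
        then show ?case using a_bound[OF finT neT _ dpos MMb[OF elim]] c(1) Dpos by simp
      qed
      have "Lj T \<le> d"
        using tendsto_le[OF trivial_limit_sequentially root_const_tendsto[OF finT neT mult_pos_pos[OF c(1) Dpos], of d]
            a_tendsto[OF finT neT] ev] c(1) Dpos by simp
      then show ?thesis using d_eq by simp
    qed
    show "jsr T \<le> \<rho>'"
    proof (rule ccontr)
      assume "\<not> jsr T \<le> \<rho>'"
      then have gt: "Lj T > \<rho>'" using jsrL by simp
      define \<epsilon> where "\<epsilon> = log k (Lj T / \<rho>') / 2"
      have q: "Lj T / \<rho>' > 1" using gt rho by simp
      have lp: "log k (Lj T / \<rho>') > 0" using q k1 by simp
      then have e: "\<epsilon> > 0" unfolding \<epsilon>_def by simp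
      have "real k powr \<epsilon> < real k powr (log k (Lj T / \<rho>'))"
        using lp k1 unfolding \<epsilon>_def by (intro powr_less_mono) auto
      also have "\<dots> = Lj T / \<rho>'" using k1 q by simp
      finally have "\<rho>' * real k powr \<epsilon> < Lj T" using rho by (simp add: field_simps)
      then show False using key[OF e] by simp
    qed
  qed
qed

end
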